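(* Let $\mathcal L$ denote the Lebesgue $\sigma$-algebra on $[0,1]$ with Lebesgue measure, and let $p\in[1,\infty)$. Then for every $k\ge2$ the set $\mathscr G_{p,k}$ is dense in $L^p([0,1],\mathcal L,dx)$ for the weak topology.
   Context: $\mathscr G_{p,k}$ is the set of functions $\sum_{i=1}^l a_i\mathbf 1_{A_i}$ with $l\le k$, $\{A_i\}$ a measurable partition of $[0,1]$, $a_i\in\mathbb R$ (simple functions taking at most $k$ values). *)

theory Defs
  imports "HOL-Analysis.Analysis"
begin

definition L01 :: "real measure" where
  "L01 = restrict_space lebesgue {0..1}"

definition Lp_fun :: "real \<Rightarrow> (real \<Rightarrow> real) set" where
  "Lp_fun p = {f. f \<in> borel_measurable L01 \<and> integrable L01 (\<lambda>x. \<bar>f x\<bar> powr p)}"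

definition Lq_dual :: "real \<Rightarrow> (real \<Rightarrow> real) set" where
  "Lq_dual p = (if p = 1
     then {g. g \<in> borel_measurable L01 \<and> (\<exists>C. AE x in L01. \<bar>g x\<bar> \<le> C)}
     else Lp_fun (p / (p - 1)))"

definition G_pk :: "real \<Rightarrow> nat \<Rightarrow> (real \<Rightarrow> real) set" where
  "G_pk p k = {h. \<exists>l A a. l \<le> k \<and> (\<forall>i<l. A i \<in> sets L01)
      \<and> (\<forall>i<l. \<forall>j<l. i \<noteq> j \<longrightarrow> A i \<inter> A j = {})
      \<and> (\<Union>i<l. A i) = {0..1::real}
      \<and> h = (\<lambda>x. \<Sum>i<l. (a i :: real) * indicator (A i) x)}"

text \<open>Density of a set S in L^p for the weak topology sigma(L^p, L^q): every basic weak
  neighbourhood of every element of L^p meets S.\<close>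
definition weakly_dense_Lp :: "real \<Rightarrow> (real \<Rightarrow> real) set \<Rightarrow> bool" where
  "weakly_dense_Lp p S \<longleftrightarrow>
     (\<forall>f \<in> Lp_fun p. \<forall>F. finite F \<and> F \<subseteq> Lq_dual p \<longrightarrow> (\<forall>e>0::real.
        \<exists>h \<in> S. \<forall>g \<in> F. \<bar>(\<integral>x. h x * g x \<partial>L01) - (\<integral>x. f x * g x \<partial>L01)\<bar> < e))"

end

theory Submission
  imports Defs
begin



lemma L01_space[simp]: "space L01 = {0..1}"
  by (simp add: L01_def)

lemma L01_sets: "A \<in> sets L01 \<longleftrightarrow> A \<subseteq> {0..1} \<and> A \<in> sets lebesgue"
  unfolding L01_def by (subst sets_restrict_space_iff) auto

lemma L01_Int_space[simp]: "B \<in> sets L01 \<Longrightarrow> B \<inter> {0..1} = B"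
  using sets.sets_into_space[of B L01] by auto

lemma L01_measure: "A \<subseteq> {0..1} \<Longrightarrow> measure L01 A = measure lebesgue A"
  unfolding L01_def by (rule measure_restrict_space) auto

lemma L01_finite: "finite_measure L01"
proof -
  have "emeasure L01 (space L01) = emeasure lebesgue {0..1::real}"
    unfolding L01_def by (subst emeasure_restrict_space) auto
  then show ?thesis by (intro finite_measureI) simp
qed

interpretation L01: finite_measure L01 by (rule L01_finite)

lemma L01_ivt:
  assumes P: "P \<in> sets L01" and t: "0 \<le> t" "t \<le> measure L01 P"
  shows "\<exists>u. measure L01 (P \<inter> {..u}) = t"
proof -
  define m where "m u = measure L01 (P \<inter> {..u})" for u :: real
  have Pl: "P \<subseteq> {0..1}" "P \<in> sets lebesgue" using P L01_sets by auto
  have Pu: "P \<inter> {..u} \<in> sets L01" for u using Pl by (auto simp: L01_sets)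
  have mono: "m v - m u \<le> v - u" "m u \<le> m v" if "u \<le> v" for u v
  proof -
    have "m v - m u = measure L01 (P \<inter> {..v} - P \<inter> {..u})"
      unfolding m_def using Pu that by (subst L01.finite_measure_Diff) auto
    also have "P \<inter> {..v} - P \<inter> {..u} = P \<inter> {u<..v}" by auto
    also have "measure L01 (P \<inter> {u<..v}) = measure lebesgue (P \<inter> {u<..v})"
      using Pl by (intro L01_measure) auto
    also have "\<dots> \<le> measure lebesgue {u..v}"
      using Pl by (intro measure_mono_fmeasurable) auto
    also have "\<dots> = v - u" using that by simp
    finally show "m v - m u \<le> v - u" using that by simp
    show "m u \<le> m v" unfolding m_def using Pu
      using that by (intro L01.finite_measure_mono) auto
  qed
  have lip: "1-lipschitz_on UNIV m"
  proof (rule lipschitz_onI)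
    fix x y :: real
    show "dist (m x) (m y) \<le> 1 * dist x y"
      using mono[of x y] mono[of y x] by (cases "x \<le> y") (auto simp: dist_real_def)
  qed simp
  have "continuous_on {-1..1} m"
    using lipschitz_on_continuous_on[OF lip] continuous_on_subset by blast
  moreover have "m (-1) = 0" unfolding m_def using Pl
    by (subgoal_tac "P \<inter> {..-1} = {}") auto
  moreover have "m 1 = measure L01 P" unfolding m_def using Pl
    by (subgoal_tac "P \<inter> {..1} = P") auto
  ultimately obtain u where "m u = t" using IVT'[of m "-1" t 1] t by auto
  then show ?thesis unfolding m_def by auto
qed




lemma L01_bounded_integrable:
  fixes f :: "real \<Rightarrow> real"
  assumes "f \<in> borel_measurable L01" "\<And>x. x \<in> {0..1} \<Longrightarrow> \<bar>f x\<bar> \<le> B"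
  shows "integrable L01 f"
  using assms by (intro L01.integrable_const_bound[where B=B]) auto

lemma L01_ind_int: "B \<in> sets L01 \<Longrightarrow> integrable L01 (\<lambda>x. indicator B x :: real)"
  by (intro L01_bounded_integrable[where B=1]) (auto simp: indicator_def)

lemma lyap_simple:
  fixes F :: "'i set" and s :: "'i \<Rightarrow> real \<Rightarrow> real"
  assumes F: "finite F" and sf: "\<And>g. g\<in>F \<Longrightarrow> simple_function L01 (s g)"
    and phim: "\<phi> \<in> borel_measurable L01" and phib: "\<And>x. x\<in>{0..1} \<Longrightarrow> 0 \<le> \<phi> x \<and> \<phi> x \<le> 1"
  shows "\<exists>A\<in>sets L01. \<forall>g\<in>F. (\<integral>x. indicator A x * s g x \<partial>L01) = (\<integral>x. \<phi> x * s g x \<partial>L01)"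
proof -
  define \<Phi> where "\<Phi> x = restrict (\<lambda>g. s g x) F" for x
  define V where "V = \<Phi> ` {0..1}"
  have "V \<subseteq> (\<Pi>\<^sub>E g\<in>F. s g ` {0..1})" unfolding V_def \<Phi>_def by auto
  moreover have "finite (\<Pi>\<^sub>E g\<in>F. s g ` {0..1})"
    using F sf simple_functionD(1)[of L01] by (intro finite_PiE) auto
  ultimately have finV: "finite V" by (rule finite_subset)
  have Vext: "v \<in> extensional F" if "v \<in> V" for v using that unfolding V_def \<Phi>_def by auto
  define P where "P v = {x\<in>{0..1}. \<forall>g\<in>F. s g x = v g}" for v
  have Pm: "P v \<in> sets L01" for v
  proof -
    have "{x\<in>space L01. \<forall>g\<in>F. s g x = v g} \<in> sets L01"
    proof (rule sets.sets_Collect_finite_All[OF _ F])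
      fix g assume "g \<in> F"
      have "s g -` {v g} \<inter> space L01 \<in> sets L01" using sf[OF \<open>g\<in>F\<close>] by (rule simple_functionD(2))
      moreover have "s g -` {v g} \<inter> space L01 = {x\<in>space L01. s g x = v g}" by auto
      ultimately show "{x\<in>space L01. s g x = v g} \<in> sets L01" by simp
    qed
    then show ?thesis unfolding P_def by simp
  qed
  have inP: "x \<in> P v \<longleftrightarrow> v = \<Phi> x" if "v \<in> V" "x \<in> {0..1}" for v x
  proof
    assume "x \<in> P v"
    then show "v = \<Phi> x" using Vext[OF that(1)] unfolding P_def \<Phi>_def
      by (intro extensionalityI[of _ F]) auto
  qed (use that in \<open>auto simp: P_def \<Phi>_def\<close>)
  have PhiV: "\<Phi> x \<in> V" if "x \<in> {0..1}" for x using that unfolding V_def by auto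
  have rep: "s g x = (\<Sum>v\<in>V. v g * indicator (P v) x)" if "g \<in> F" "x \<in> {0..1}" for g x
  proof -
    have "(\<Sum>v\<in>V. v g * indicator (P v) x) = (\<Sum>v\<in>V. if v = \<Phi> x then v g else 0)"
      using inP that by (intro sum.cong) (auto simp: indicator_def)
    also have "\<dots> = \<Phi> x g" using finV PhiV[OF that(2)] by (simp add: sum.delta')
    finally show ?thesis using that by (simp add: \<Phi>_def)
  qed
  define t where "t v = (\<integral>x. \<phi> x * indicator (P v) x \<partial>L01)" for v
  have intphi: "integrable L01 (\<lambda>x. \<phi> x * indicator (P v) x)" for v
    using phim Pm phib by (intro L01_bounded_integrable[where B=1]) (auto simp: indicator_def abs_if, force)
  have "\<exists>u. measure L01 (P v \<inter> {..u}) = t v" for v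
  proof (rule L01_ivt[OF Pm])
    show "0 \<le> t v" unfolding t_def using phib by (intro integral_nonneg_AE) (auto simp: indicator_def)
    have "t v \<le> (\<integral>x. indicator (P v) x \<partial>L01)" unfolding t_def
    proof (rule integral_mono[OF intphi])
      show "integrable L01 (\<lambda>x. indicator (P v) x :: real)"
        using Pm by (intro L01_bounded_integrable[where B=1]) (auto simp: indicator_def)
    qed (use phib Pm in \<open>auto simp: indicator_def\<close>)
    also have "\<dots> = measure L01 (P v)" using Pm by simp
    finally show "t v \<le> measure L01 (P v)" .
  qed
  then obtain u where u: "\<And>v. measure L01 (P v \<inter> {..u v}) = t v" by metis
  define A where "A = (\<Union>v\<in>V. P v \<inter> {..u v})"
  have Pum: "P v \<inter> {..u v} \<in> sets L01" for v using Pm by (auto simp: L01_sets)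
  have Am: "A \<in> sets L01" unfolding A_def using finV Pum by auto
  have AP: "A \<inter> P v = P v \<inter> {..u v}" if "v \<in> V" for v
  proof -
    have "P w \<inter> P v = {}" if "w \<in> V" "w \<noteq> v" for w
    proof (intro equalityI subsetI)
      fix x assume x: "x \<in> P w \<inter> P v"
      then have "x \<in> {0..1}" by (auto simp: P_def)
      then show "x \<in> {}" using x inP[OF that(1)] inP[OF \<open>v\<in>V\<close>] that(2) by auto
    qed auto
    then show ?thesis unfolding A_def using that by auto
  qed
  show ?thesis
  proof (intro bexI[OF _ Am] ballI)
    fix g assume g: "g \<in> F"
    have "(\<integral>x. indicator A x * s g x \<partial>L01) = (\<integral>x. (\<Sum>v\<in>V. v g * indicator (A \<inter> P v) x) \<partial>L01)"
      using rep[OF g] by (intro Bochner_Integration.integral_cong)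
        (auto simp: sum_distrib_left indicator_inter_arith mult_ac)
    also have "\<dots> = (\<Sum>v\<in>V. v g * measure L01 (A \<inter> P v))"
    proof -
      have "(\<integral>x. (\<Sum>v\<in>V. v g * indicator (A \<inter> P v) x) \<partial>L01) = (\<Sum>v\<in>V. \<integral>x. v g * indicator (A \<inter> P v) x \<partial>L01)"
        by (rule Bochner_Integration.integral_sum) (use Am Pm in \<open>auto intro!: L01_ind_int\<close>)
      also have "\<dots> = (\<Sum>v\<in>V. v g * measure L01 (A \<inter> P v))"
        using Am Pm by (intro sum.cong) (auto simp: sets.Int)
      finally show ?thesis .
    qed
    also have "\<dots> = (\<Sum>v\<in>V. v g * t v)" using AP u by (intro sum.cong) auto
    also have "\<dots> = (\<Sum>v\<in>V. (\<integral>x. v g * (\<phi> x * indicator (P v) x) \<partial>L01))"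
      unfolding t_def by simp
    also have "\<dots> = (\<integral>x. (\<Sum>v\<in>V. v g * (\<phi> x * indicator (P v) x)) \<partial>L01)"
      by (rule Bochner_Integration.integral_sum[symmetric]) (use intphi in auto)
    also have "\<dots> = (\<integral>x. \<phi> x * s g x \<partial>L01)"
      using rep[OF g] by (intro Bochner_Integration.integral_cong)
        (auto simp: sum_distrib_left mult_ac)
    finally show "(\<integral>x. indicator A x * s g x \<partial>L01) = (\<integral>x. \<phi> x * s g x \<partial>L01)" .
  qed
qed




lemma simple_approx:
  fixes g :: "real \<Rightarrow> real"
  assumes g: "integrable L01 g" and d: "0 < d"
  shows "\<exists>s. simple_function L01 s \<and> integrable L01 s \<and> (\<integral>x. \<bar>g x - s x\<bar> \<partial>L01) < d"
proof -
  from g have "has_bochner_integral L01 g (integral\<^sup>L L01 g)"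
    by (rule has_bochner_integral_integrable)
  then obtain s where s: "\<And>i. Bochner_Integration.simple_bochner_integrable L01 (s i)"
    and lim: "(\<lambda>i. \<integral>\<^sup>+x. norm (g x - s i x) \<partial>L01) \<longlonglongrightarrow> 0"
    by (cases rule: has_bochner_integral.cases) auto
  have "eventually (\<lambda>i. (\<integral>\<^sup>+x. norm (g x - s i x) \<partial>L01) < ennreal d) sequentially"
    using lim d by (intro order_tendstoD(2)) auto
  then obtain i where i: "(\<integral>\<^sup>+x. norm (g x - s i x) \<partial>L01) < ennreal d"
    by (auto dest: eventually_happens)
  have sf: "simple_function L01 (s i)" using s[of i] by (cases rule: Bochner_Integration.simple_bochner_integrable.cases)
  have si: "integrable L01 (s i)"
    using has_bochner_integral_simple_bochner_integrable[OF s[of i]] unfolding integrable.simps by blast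
  have "(\<integral>\<^sup>+x. norm (g x - s i x) \<partial>L01) = ennreal (\<integral>x. \<bar>g x - s i x\<bar> \<partial>L01)"
    using g si by (subst nn_integral_eq_integral) auto
  with i d have "(\<integral>x. \<bar>g x - s i x\<bar> \<partial>L01) < d"
    by (simp add: ennreal_less_iff)
  with sf si show ?thesis by blast
qed

lemma int_bdd_mult:
  fixes g h :: "real \<Rightarrow> real"
  assumes g: "integrable L01 g" and h: "h \<in> borel_measurable L01" "\<And>x. x\<in>{0..1} \<Longrightarrow> \<bar>h x\<bar> \<le> 1"
  shows "integrable L01 (\<lambda>x. h x * g x)"
proof (rule Bochner_Integration.integrable_bound[OF g])
  show "(\<lambda>x. h x * g x) \<in> borel_measurable L01"
    using h g by measurable
  show "AE x in L01. norm (h x * g x) \<le> norm (g x)"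
    using h(2) by (intro AE_I2) (auto simp: abs_mult intro: mult_left_le_one_le)
qed

lemma diff_bound:
  fixes g s h :: "real \<Rightarrow> real"
  assumes g: "integrable L01 g" and s: "integrable L01 s"
    and h: "h \<in> borel_measurable L01" "\<And>x. x\<in>{0..1} \<Longrightarrow> \<bar>h x\<bar> \<le> 1"
  shows "\<bar>(\<integral>x. h x * g x \<partial>L01) - (\<integral>x. h x * s x \<partial>L01)\<bar> \<le> (\<integral>x. \<bar>g x - s x\<bar> \<partial>L01)"
proof -
  have ig: "integrable L01 (\<lambda>x. h x * g x)" "integrable L01 (\<lambda>x. h x * s x)"
    using int_bdd_mult[OF g h] int_bdd_mult[OF s h] by auto
  have "(\<integral>x. h x * g x \<partial>L01) - (\<integral>x. h x * s x \<partial>L01) = (\<integral>x. h x * g x - h x * s x \<partial>L01)"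
    using ig by simp
  also have "\<bar>\<dots>\<bar> \<le> (\<integral>x. \<bar>g x - s x\<bar> \<partial>L01)"
  proof (rule integral_abs_bound_integral)
    show "integrable L01 (\<lambda>x. h x * g x - h x * s x)" using ig by auto
    show "integrable L01 (\<lambda>x. \<bar>g x - s x\<bar>)" using g s by auto
    fix x assume "x \<in> space L01"
    then have "\<bar>h x\<bar> \<le> 1" using h by auto
    then have "\<bar>h x\<bar> * \<bar>g x - s x\<bar> \<le> 1 * \<bar>g x - s x\<bar>" by (intro mult_right_mono) auto
    then show "\<bar>h x * g x - h x * s x\<bar> \<le> \<bar>g x - s x\<bar>"
      by (simp add: abs_mult right_diff_distrib[symmetric])
  qed
  finally show ?thesis .
qed

lemma lyap_approx:
  fixes F :: "(real \<Rightarrow> real) set"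
  assumes F: "finite F" and gi: "\<And>g. g\<in>F \<Longrightarrow> integrable L01 g"
    and phim: "\<phi> \<in> borel_measurable L01" and phib: "\<And>x. x\<in>{0..1} \<Longrightarrow> 0 \<le> \<phi> x \<and> \<phi> x \<le> 1"
    and d: "0 < d"
  shows "\<exists>A\<in>sets L01. \<forall>g\<in>F. \<bar>(\<integral>x. indicator A x * g x \<partial>L01) - (\<integral>x. \<phi> x * g x \<partial>L01)\<bar> < d"
proof -
  have "\<forall>g\<in>F. \<exists>s. simple_function L01 s \<and> integrable L01 s \<and> (\<integral>x. \<bar>g x - s x\<bar> \<partial>L01) < d/2"
  proof
    fix g assume g: "g \<in> F"
    show "\<exists>s. simple_function L01 s \<and> integrable L01 s \<and> (\<integral>x. \<bar>g x - s x\<bar> \<partial>L01) < d/2"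
      using simple_approx[OF gi[OF g] half_gt_zero[OF d]] .
  qed
  then obtain s where s: "\<And>g. g\<in>F \<Longrightarrow> simple_function L01 (s g) \<and> integrable L01 (s g) \<and> (\<integral>x. \<bar>g x - s g x\<bar> \<partial>L01) < d/2"
    by metis
  obtain A where A: "A \<in> sets L01" and eq: "\<forall>g\<in>F. (\<integral>x. indicator A x * s g x \<partial>L01) = (\<integral>x. \<phi> x * s g x \<partial>L01)"
    using lyap_simple[OF F _ phim phib, of s] s by auto
  show ?thesis
  proof (intro bexI[OF _ A] ballI)
    fix g assume g: "g \<in> F"
    have hA: "(\<lambda>x. indicator A x :: real) \<in> borel_measurable L01" "\<And>x. \<bar>indicator A x :: real\<bar> \<le> 1"
      using A by (auto simp: indicator_def)
    have hp: "\<And>x. x\<in>{0..1} \<Longrightarrow> \<bar>\<phi> x\<bar> \<le> 1" using phib by fastforce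
    have 1: "\<bar>(\<integral>x. indicator A x * g x \<partial>L01) - (\<integral>x. indicator A x * s g x \<partial>L01)\<bar> < d/2"
      using diff_bound[OF gi[OF g] _ hA(1)] hA(2) s[OF g] by fastforce
    have 2: "\<bar>(\<integral>x. \<phi> x * g x \<partial>L01) - (\<integral>x. \<phi> x * s g x \<partial>L01)\<bar> < d/2"
      using diff_bound[OF gi[OF g] _ phim hp] s[OF g] by fastforce
    show "\<bar>(\<integral>x. indicator A x * g x \<partial>L01) - (\<integral>x. \<phi> x * g x \<partial>L01)\<bar> < d"
    proof -
      have e: "(\<integral>x. indicator A x * s g x \<partial>L01) = (\<integral>x. \<phi> x * s g x \<partial>L01)" using eq g by auto
      show ?thesis using 1 2 unfolding e by linarith
    qed
  qed
qed




lemma young_abs: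
  fixes p a b :: real
  assumes "1 < p"
  shows "\<bar>a * b\<bar> \<le> \<bar>a\<bar> powr p / p + \<bar>b\<bar> powr (p/(p-1)) / (p/(p-1))"
proof -
  have q: "1 < p/(p-1)" using assms by (simp add: field_simps)
  have "1/p + 1/(p/(p-1)) = 1" using assms by (simp add: field_simps)
  then show ?thesis using Youngs_inequality[OF assms q, of "\<bar>a\<bar>" "\<bar>b\<bar>"] by (simp add: abs_mult)
qed

lemma Lp_int:
  assumes p: "1 \<le> p" and f: "f \<in> Lp_fun p"
  shows "integrable L01 f"
proof -
  have fm: "f \<in> borel_measurable L01" and fi: "integrable L01 (\<lambda>x. \<bar>f x\<bar> powr p)"
    using f by (auto simp: Lp_fun_def)
  show ?thesis
  proof (cases "p = 1")
    case True
    then have "integrable L01 (\<lambda>x. \<bar>f x\<bar>)" using fi by simp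
    then show ?thesis using fm by (simp add: integrable_abs_iff)
  next
    case False
    then have p1: "1 < p" using p by simp
    show ?thesis
    proof (rule Bochner_Integration.integrable_bound[OF _ fm])
      show "integrable L01 (\<lambda>x. \<bar>f x\<bar> powr p / p + 1 / (p/(p-1)))"
        using fi by auto
      show "AE x in L01. norm (f x) \<le> norm (\<bar>f x\<bar> powr p / p + 1 / (p/(p-1)))"
      proof (intro AE_I2)
        fix x
        have "\<bar>f x * 1\<bar> \<le> \<bar>f x\<bar> powr p / p + \<bar>1\<bar> powr (p/(p-1)) / (p/(p-1))"
          by (rule young_abs[OF p1])
        then show "norm (f x) \<le> norm (\<bar>f x\<bar> powr p / p + 1 / (p/(p-1)))" by simp
      qed
    qed
  qed
qed

lemma Lq_int:
  assumes p: "1 \<le> p" and g: "g \<in> Lq_dual p"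
  shows "integrable L01 g"
proof (cases "p = 1")
  case True
  then obtain C where gm: "g \<in> borel_measurable L01" and C: "AE x in L01. \<bar>g x\<bar> \<le> C"
    using g by (auto simp: Lq_dual_def)
  show ?thesis using C gm by (intro L01.integrable_const_bound[where B=C]) auto
next
  case False
  then have "g \<in> Lp_fun (p/(p-1))" using g by (simp add: Lq_dual_def)
  moreover have "1 \<le> p/(p-1)" using False p by (simp add: field_simps)
  ultimately show ?thesis using Lp_int by blast
qed

lemma prod_int:
  assumes p: "1 \<le> p" and f: "f \<in> Lp_fun p" and g: "g \<in> Lq_dual p"
  shows "integrable L01 (\<lambda>x. f x * g x)"
proof -
  have fm: "f \<in> borel_measurable L01" and fi: "integrable L01 (\<lambda>x. \<bar>f x\<bar> powr p)"
    using f by (auto simp: Lp_fun_def)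
  have gm: "g \<in> borel_measurable L01" using g by (auto simp: Lq_dual_def Lp_fun_def split: if_splits)
  show ?thesis
  proof (cases "p = 1")
    case True
    then obtain C where C: "AE x in L01. \<bar>g x\<bar> \<le> C"
      using g by (auto simp: Lq_dual_def)
    have fint: "integrable L01 f" using Lp_int[OF p f] .
    show ?thesis
    proof (rule Bochner_Integration.integrable_bound[of L01 "\<lambda>x. C * f x"])
      show "integrable L01 (\<lambda>x. C * f x)" using fint by auto
      show "(\<lambda>x. f x * g x) \<in> borel_measurable L01" using fm gm by measurable
      show "AE x in L01. norm (f x * g x) \<le> norm (C * f x)"
        using C
      proof (rule AE_mp, intro AE_I2 impI)
        fix x assume "\<bar>g x\<bar> \<le> C"
        then have "\<bar>f x\<bar> * \<bar>g x\<bar> \<le> \<bar>f x\<bar> * C" by (intro mult_left_mono) auto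
        also have "\<dots> \<le> \<bar>f x\<bar> * \<bar>C\<bar>" by (intro mult_left_mono) auto
        finally show "norm (f x * g x) \<le> norm (C * f x)" by (simp add: abs_mult mult_ac)
      qed
    qed
  next
    case False
    then have p1: "1 < p" using p by simp
    have gi: "integrable L01 (\<lambda>x. \<bar>g x\<bar> powr (p/(p-1)))"
      using g False by (auto simp: Lq_dual_def Lp_fun_def)
    show ?thesis
    proof (rule Bochner_Integration.integrable_bound)
      show "integrable L01 (\<lambda>x. \<bar>f x\<bar> powr p / p + \<bar>g x\<bar> powr (p/(p-1)) / (p/(p-1)))"
        using fi gi by auto
      show "(\<lambda>x. f x * g x) \<in> borel_measurable L01" using fm gm by measurable
      show "AE x in L01. norm (f x * g x) \<le> norm (\<bar>f x\<bar> powr p / p + \<bar>g x\<bar> powr (p/(p-1)) / (p/(p-1)))"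
        using young_abs[OF p1] by (intro AE_I2) (simp, smt (verit) young_abs[OF p1])
    qed
  qed
qed




theorem proposition2p1:
  fixes p :: real and k :: nat
  assumes "1 \<le> p" and "2 \<le> k"
  shows "weakly_dense_Lp p (G_pk p k)"
  unfolding weakly_dense_Lp_def
proof (intro ballI allI impI)
  fix f F and e :: real
  assume f: "f \<in> Lp_fun p" and FF: "finite F \<and> F \<subseteq> Lq_dual p" and e: "0 < e"
  have F: "finite F" and FL: "F \<subseteq> Lq_dual p" using FF by auto
  have fm: "f \<in> borel_measurable L01" using f by (auto simp: Lp_fun_def)
  have gi: "integrable L01 g" if "g \<in> F" for g using Lq_int[OF assms(1)] FL that by auto
  have gm: "g \<in> borel_measurable L01" if "g \<in> F" for g using gi[OF that] by auto
  define T where "T n x = max (- real n) (min (real n) (f x))" for n :: nat and x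
  have Tm: "T n \<in> borel_measurable L01" for n unfolding T_def using fm by measurable
  have conv: "(\<lambda>n. \<integral>x. T n x * g x \<partial>L01) \<longlonglongrightarrow> (\<integral>x. f x * g x \<partial>L01)" if g: "g \<in> F" for g
  proof (rule integral_dominated_convergence[where w="\<lambda>x. \<bar>f x * g x\<bar>"])
    show "(\<lambda>x. f x * g x) \<in> borel_measurable L01" using fm gm[OF g] by measurable
    show "(\<lambda>x. T n x * g x) \<in> borel_measurable L01" for n using Tm gm[OF g] by measurable
    show "integrable L01 (\<lambda>x. \<bar>f x * g x\<bar>)" using prod_int[OF assms(1) f] FL g by auto
    show "AE x in L01. (\<lambda>n. T n x * g x) \<longlonglongrightarrow> f x * g x"
    proof (intro AE_I2 tendsto_eventually)
      fix x
      obtain N :: nat where "\<bar>f x\<bar> \<le> real N" using real_arch_simple by blast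
      then show "eventually (\<lambda>n. T n x * g x = f x * g x) sequentially"
        unfolding eventually_sequentially T_def by (intro exI[of _ N]) auto
    qed
    show "AE x in L01. norm (T n x * g x) \<le> \<bar>f x * g x\<bar>" for n
      by (intro AE_I2) (auto simp: T_def abs_mult intro!: mult_right_mono)
  qed
  have "eventually (\<lambda>n. \<forall>g\<in>F. \<bar>(\<integral>x. T n x * g x \<partial>L01) - (\<integral>x. f x * g x \<partial>L01)\<bar> < e/2) sequentially"
  proof (rule eventually_ball_finite[OF F], intro ballI)
    fix g assume g: "g \<in> F"
    from tendstoD[OF conv[OF g], of "e/2"] e
    show "eventually (\<lambda>n. \<bar>(\<integral>x. T n x * g x \<partial>L01) - (\<integral>x. f x * g x \<partial>L01)\<bar> < e/2) sequentially"
      by (simp add: dist_real_def)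
  qed
  moreover have "eventually (\<lambda>n::nat. 1 \<le> n) sequentially" by (rule eventually_ge_at_top)
  ultimately have "eventually (\<lambda>n. 1 \<le> n \<and> (\<forall>g\<in>F. \<bar>(\<integral>x. T n x * g x \<partial>L01) - (\<integral>x. f x * g x \<partial>L01)\<bar> < e/2)) sequentially"
    by (rule eventually_conj[rotated])
  then obtain n where n1: "1 \<le> n"
    and close1': "\<forall>g\<in>F. \<bar>(\<integral>x. T n x * g x \<partial>L01) - (\<integral>x. f x * g x \<partial>L01)\<bar> < e/2"
    unfolding eventually_sequentially by blast
  have close1: "\<And>g. g \<in> F \<Longrightarrow> \<bar>(\<integral>x. T n x * g x \<partial>L01) - (\<integral>x. f x * g x \<partial>L01)\<bar> < e/2"
    using close1' by blast
  define M where "M = real n"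
  have M: "1 \<le> M" using n1 by (simp add: M_def)
  define \<phi> where "\<phi> x = (T n x + M) / (2 * M)" for x
  have phim: "\<phi> \<in> borel_measurable L01" unfolding \<phi>_def using Tm by measurable
  have phib: "0 \<le> \<phi> x \<and> \<phi> x \<le> 1" for x
    using M unfolding \<phi>_def T_def M_def by (auto simp: field_simps)
  have d: "0 < e / (4 * M)" using e M by simp
  obtain A where A: "A \<in> sets L01"
    and close2: "\<And>g. g \<in> F \<Longrightarrow> \<bar>(\<integral>x. indicator A x * g x \<partial>L01) - (\<integral>x. \<phi> x * g x \<partial>L01)\<bar> < e / (4 * M)"
    using lyap_approx[OF F gi phim _ d] phib by blast
  have Asub: "A \<subseteq> {0..1}" using A by (auto simp: L01_sets)
  define B where "B i = (if i = (0::nat) then A else {0..1} - A)" for i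
  define a where "a i = (if i = (0::nat) then M else - M)" for i
  define h where "h = (\<lambda>x. \<Sum>i<2. a i * indicator (B i) x)"
  have two: "{..<2::nat} = {0, 1}" by auto
  have hx: "h x = a 0 * indicator (B 0) x + a 1 * indicator (B 1) x" for x
    unfolding h_def by (simp only: numeral_2_eq_2 sum.lessThan_Suc lessThan_0 sum.empty One_nat_def add_0_left)
  have hG: "h \<in> G_pk p k"
    unfolding G_pk_def
  proof (intro CollectI exI conjI)
    show "(2::nat) \<le> k" by (rule assms(2))
    show "\<forall>i<2. B i \<in> sets L01" using A sets.compl_sets[OF A] by (auto simp: B_def)
    show "\<forall>i<2. \<forall>j<2. i \<noteq> j \<longrightarrow> B i \<inter> B j = {}" by (auto simp: B_def less_2_cases_iff)
    show "(\<Union>i<2. B i) = {0..1}" using Asub unfolding two by (auto simp: B_def)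
    show "h = (\<lambda>x. \<Sum>i<2. a i * indicator (B i) x)" by (rule h_def)
  qed
  show "\<exists>h\<in>G_pk p k. \<forall>g\<in>F. \<bar>(\<integral>x. h x * g x \<partial>L01) - (\<integral>x. f x * g x \<partial>L01)\<bar> < e"
  proof (intro bexI[OF _ hG] ballI)
    fix g assume g: "g \<in> F"
    have iA: "integrable L01 (\<lambda>x. indicator A x * g x)"
      using A by (intro int_bdd_mult[OF gi[OF g]]) (auto simp: indicator_def)
    have iphi: "integrable L01 (\<lambda>x. \<phi> x * g x)"
      using phib by (intro int_bdd_mult[OF gi[OF g] phim]) (auto simp: abs_le_iff intro: order_trans[of _ 0])
    have "(\<integral>x. h x * g x \<partial>L01) = (\<integral>x. 2 * M * (indicator A x * g x) - M * g x \<partial>L01)"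
    proof (rule Bochner_Integration.integral_cong)
      fix x assume "x \<in> space L01"
      then show "h x * g x = 2 * M * (indicator A x * g x) - M * g x"
        unfolding hx by (auto simp: B_def a_def indicator_def algebra_simps)
    qed simp
    also have "\<dots> = 2 * M * (\<integral>x. indicator A x * g x \<partial>L01) - M * (\<integral>x. g x \<partial>L01)"
      using iA gi[OF g] by simp
    finally have eh: "(\<integral>x. h x * g x \<partial>L01) = 2 * M * (\<integral>x. indicator A x * g x \<partial>L01) - M * (\<integral>x. g x \<partial>L01)" .
    have "(\<integral>x. T n x * g x \<partial>L01) = (\<integral>x. 2 * M * (\<phi> x * g x) - M * g x \<partial>L01)"
    proof (rule Bochner_Integration.integral_cong)
      fix x
      show "T n x * g x = 2 * M * (\<phi> x * g x) - M * g x"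
        using M unfolding \<phi>_def by (simp add: field_simps)
    qed simp
    also have "\<dots> = 2 * M * (\<integral>x. \<phi> x * g x \<partial>L01) - M * (\<integral>x. g x \<partial>L01)"
      using iphi gi[OF g] by simp
    finally have eT: "(\<integral>x. T n x * g x \<partial>L01) = 2 * M * (\<integral>x. \<phi> x * g x \<partial>L01) - M * (\<integral>x. g x \<partial>L01)" .
    have "\<bar>(\<integral>x. h x * g x \<partial>L01) - (\<integral>x. T n x * g x \<partial>L01)\<bar>
        = 2 * M * \<bar>(\<integral>x. indicator A x * g x \<partial>L01) - (\<integral>x. \<phi> x * g x \<partial>L01)\<bar>"
      unfolding eh eT using M by (simp add: abs_mult right_diff_distrib[symmetric])
    also have "\<dots> \<le> 2 * M * (e / (4 * M))"
      using close2[OF g] M by (intro mult_left_mono) auto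
    also have "\<dots> = e / 2" using M by (simp add: field_simps)
    finally have "\<bar>(\<integral>x. h x * g x \<partial>L01) - (\<integral>x. T n x * g x \<partial>L01)\<bar> \<le> e / 2" .
    then show "\<bar>(\<integral>x. h x * g x \<partial>L01) - (\<integral>x. f x * g x \<partial>L01)\<bar> < e"
      using close1[OF g] by linarith
  qed
qed


end
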